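(* Let $G$ be a connected graph in $\mathcal{C}$ and $C$ an induced $C_5$ in $G$ with vertices $0,\dots,4$ in cyclic order. For every $i$, no vertex of $X_i$ has two non-adjacent neighbours in $X\setminus X_i$.
   Context: $\mathcal{C}=\mathrm{Free}(\text{claw}, 4K_1, \text{5-wheel}, C_5\text{-twin}, P_5\text{-twin}, K_5-e)$, where $\mathrm{Free}(L)$ is the class of graphs with no induced subgraph isomorphic to a member of $L$; the claw is $K_{1,3}$; $4K_1$ is the edgeless graph on 4 vertices; the 5-wheel is $C_5$ plus a vertex adjacent to all five cycle vertices; the $C_5$-twin is $C_5$ plus a new vertex adjacent to one cycle vertex $v$ and both cycle-neighbours of $v$; the $P_5$-twin is a path $p_1p_2p_3p_4p_5$ plus a new vertex adjacent to exactly $p_2,p_3,p_4$; $K_5-e$ is $K_5$ minus one edge. Given an induced cycle $C$ of length 5 with vertices $0,\dots,4$ in cyclic order (indices taken mod 5): $R$ is the set of vertices outside $C$ with no neighbour in $C$; $X_j$ is the set of vertices outside $C$ whose neighbourhood in $C$ is exactly $\{j,j+1\}$; $Y_j$ is the set of vertices outside $C$ whose neighbourhood in $C$ is exactly $\{j,j+1,j+2,j+3\}$; $X=\bigcup_j X_j$, $Y=\bigcup_j Y_j$. *)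

theory Defs
  imports Main
begin

definition graph :: "'a set \<Rightarrow> ('a \<Rightarrow> 'a \<Rightarrow> bool) \<Rightarrow> bool" where
  "graph V E \<longleftrightarrow> finite V \<and> (\<forall>x y. E x y \<longrightarrow> E y x) \<and> (\<forall>x. \<not> E x x)
     \<and> (\<forall>x y. E x y \<longrightarrow> x \<in> V \<and> y \<in> V)"

definition connected_graph :: "'a set \<Rightarrow> ('a \<Rightarrow> 'a \<Rightarrow> bool) \<Rightarrow> bool" where
  "connected_graph V E \<longleftrightarrow> V \<noteq> {} \<and> (\<forall>x\<in>V. \<forall>y\<in>V. (\<lambda>a b. E a b)\<^sup>*\<^sup>* x y)"

definition has_induced :: "'b set \<Rightarrow> ('b \<Rightarrow> 'b \<Rightarrow> bool) \<Rightarrow> 'a set \<Rightarrow> ('a \<Rightarrow> 'a \<Rightarrow> bool) \<Rightarrow> bool" where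
  "has_induced VH EH V E \<longleftrightarrow> (\<exists>f. inj_on f VH \<and> f ` VH \<subseteq> V \<and>
      (\<forall>a\<in>VH. \<forall>b\<in>VH. a \<noteq> b \<longrightarrow> (E (f a) (f b) \<longleftrightarrow> EH a b)))"

definition symc :: "(nat \<times> nat) set \<Rightarrow> nat \<Rightarrow> nat \<Rightarrow> bool" where
  "symc S a b \<longleftrightarrow> (a, b) \<in> S \<or> (b, a) \<in> S"

definition cyc5_edges :: "(nat \<times> nat) set" where
  "cyc5_edges = {(0,1),(1,2),(2,3),(3,4),(4,0)}"

definition claw_E :: "nat \<Rightarrow> nat \<Rightarrow> bool" where
  "claw_E = symc {(0,1),(0,2),(0,3)}"
definition fourK1_E :: "nat \<Rightarrow> nat \<Rightarrow> bool" where
  "fourK1_E = symc {}"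
definition wheel5_E :: "nat \<Rightarrow> nat \<Rightarrow> bool" where
  "wheel5_E = symc (cyc5_edges \<union> {(5,0),(5,1),(5,2),(5,3),(5,4)})"
definition C5twin_E :: "nat \<Rightarrow> nat \<Rightarrow> bool" where
  "C5twin_E = symc (cyc5_edges \<union> {(5,4),(5,0),(5,1)})"
definition P5twin_E :: "nat \<Rightarrow> nat \<Rightarrow> bool" where
  "P5twin_E = symc {(0,1),(1,2),(2,3),(3,4),(5,1),(5,2),(5,3)}"
definition K5e_E :: "nat \<Rightarrow> nat \<Rightarrow> bool" where
  "K5e_E a b \<longleftrightarrow> a \<noteq> b \<and> {a, b} \<noteq> {0, 1}"

definition in_class_C :: "'a set \<Rightarrow> ('a \<Rightarrow> 'a \<Rightarrow> bool) \<Rightarrow> bool" where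
  "in_class_C V E \<longleftrightarrow>
     \<not> has_induced {0..<4} claw_E V E \<and>
     \<not> has_induced {0..<4} fourK1_E V E \<and>
     \<not> has_induced {0..<6} wheel5_E V E \<and>
     \<not> has_induced {0..<6} C5twin_E V E \<and>
     \<not> has_induced {0..<6} P5twin_E V E \<and>
     \<not> has_induced {0..<5} K5e_E V E"

definition induced_C5 :: "'a set \<Rightarrow> ('a \<Rightarrow> 'a \<Rightarrow> bool) \<Rightarrow> (nat \<Rightarrow> 'a) \<Rightarrow> bool" where
  "induced_C5 V E c \<longleftrightarrow> inj_on c {0..<5} \<and> c ` {0..<5} \<subseteq> V \<and>
     (\<forall>i<5. \<forall>j<5. E (c i) (c j) \<longleftrightarrow> (j = (i + 1) mod 5 \<or> i = (j + 1) mod 5))"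

definition nbrs_on_C :: "('a \<Rightarrow> 'a \<Rightarrow> bool) \<Rightarrow> (nat \<Rightarrow> 'a) \<Rightarrow> 'a \<Rightarrow> nat set" where
  "nbrs_on_C E c v = {j. j < 5 \<and> E v (c j)}"

definition Xset :: "'a set \<Rightarrow> ('a \<Rightarrow> 'a \<Rightarrow> bool) \<Rightarrow> (nat \<Rightarrow> 'a) \<Rightarrow> nat \<Rightarrow> 'a set" where
  "Xset V E c j = {v \<in> V - c ` {0..<5}. nbrs_on_C E c v = {j mod 5, (j + 1) mod 5}}"

definition Xall :: "'a set \<Rightarrow> ('a \<Rightarrow> 'a \<Rightarrow> bool) \<Rightarrow> (nat \<Rightarrow> 'a) \<Rightarrow> 'a set" where
  "Xall V E c = (\<Union>j<5. Xset V E c j)"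

end

theory Submission
  imports Defs
begin

lemma embed:
  assumes "distinct vs" "length vs = n" "set vs \<subseteq> V"
    and "\<forall>a\<in>{0..<n}. \<forall>b\<in>{0..<n}. a \<noteq> b \<longrightarrow> (E (vs!a) (vs!b) \<longleftrightarrow> P a b)"
  shows "has_induced {0..<n} P V E"
  unfolding has_induced_def
proof (intro exI[of _ "\<lambda>k. vs ! k"] conjI)
  show "inj_on ((!) vs) {0..<n}" using assms(1,2) by (simp add: inj_on_def nth_eq_iff_index_eq)
  show "(!) vs ` {0..<n} \<subseteq> V" using assms(2,3) by auto
qed (use assms(4) in auto)

lemma less5: "(n::nat) < 5 \<longleftrightarrow> n = 0 \<or> n = 1 \<or> n = 2 \<or> n = 3 \<or> n = 4" by auto

lemma four: "{0..<4::nat} = {0,1,2,3}" by auto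
lemma six: "{0..<6::nat} = {0,1,2,3,4,5}" by auto

lemma core:
  fixes d :: "nat \<Rightarrow> 'a"
  assumes sym: "\<forall>u v. E u v \<longrightarrow> E v u"
    and C: "in_class_C V E"
    and dV: "\<forall>k<5. d k \<in> V" and xV: "x \<in> V" and aV: "a \<in> V" and bV: "b \<in> V"
    and dinj: "inj_on d {0..<5}"
    and dE: "\<forall>k<5. \<forall>l<5. E (d k) (d l) \<longleftrightarrow> (l = (k + 1) mod 5 \<or> k = (l + 1) mod 5)"
    and xd: "\<forall>k<5. E x (d k) \<longleftrightarrow> (k = 0 \<or> k = 1)"
    and ad: "\<exists>j\<in>{1,2,3,4}. \<forall>k<5. E a (d k) \<longleftrightarrow> (k = j \<or> k = (j + 1) mod 5)"
    and bd: "\<exists>j\<in>{1,2,3,4}. \<forall>k<5. E b (d k) \<longleftrightarrow> (k = j \<or> k = (j + 1) mod 5)"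
    and xnd: "x \<notin> d ` {0..<5}" and and': "a \<notin> d ` {0..<5}" and bnd: "b \<notin> d ` {0..<5}"
    and ab: "a \<noteq> b" and xa: "E x a" and xb: "E x b" and nab: "\<not> E a b"
    and irr: "\<forall>u. \<not> E u u"
  shows False
proof -
  have dn: "d k \<noteq> d l" if "k<5" "l<5" "k\<noteq>l" for k l using dinj that unfolding inj_on_def by auto
  have d01: "d 0 \<noteq> d 1" "d 0 \<noteq> d 2" "d 0 \<noteq> d 3" "d 0 \<noteq> d 4" "d 1 \<noteq> d 2" "d 1 \<noteq> d 3"
     "d 1 \<noteq> d 4" "d 2 \<noteq> d 3" "d 2 \<noteq> d 4" "d 3 \<noteq> d 4"
    using dn by simp_all
  have dne: "x \<noteq> d k" "a \<noteq> d k" "b \<noteq> d k" if "k < 5" for k using xnd and' bnd that by auto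
  have xa': "x \<noteq> a" "x \<noteq> b" using xa xb irr by auto
  have dE': "E (d 0) (d 1)" "E (d 1) (d 2)" "E (d 2) (d 3)" "E (d 3) (d 4)" "E (d 4) (d 0)"
    "\<not> E (d 0) (d 2)" "\<not> E (d 0) (d 3)" "\<not> E (d 1) (d 3)" "\<not> E (d 1) (d 4)" "\<not> E (d 2) (d 4)"
    using dE by auto
  have sy: "E u v \<longleftrightarrow> E v u" for u v using sym by blast
  have xd': "E x (d 0)" "E x (d 1)" "\<not> E x (d 2)" "\<not> E x (d 3)" "\<not> E x (d 4)" using xd by auto
  have noclaw: "\<not> has_induced {0..<4} claw_E V E" using C by (simp add: in_class_C_def)
  have nop5: "\<not> has_induced {0..<6} P5twin_E V E" using C by (simp add: in_class_C_def)
  have claw: False if "\<not> E u p" "\<not> E u q" "\<not> E p q" "E x u" "E x p" "E x q"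
     "u \<in> V" "p \<in> V" "q \<in> V" "distinct [x,u,p,q]" for u p q
  proof -
    have "has_induced {0..<4} claw_E V E"
      apply (rule embed[where vs="[x,u,p,q]"])
      using that xV by (auto simp: four claw_E_def symc_def sy)
    with noclaw show False by simp
  qed
  have p5: False if "E a (d 0)" "E a (d 4)" "\<not> E a (d 1)" "\<not> E a (d 2)" "\<not> E a (d 3)"
     "E b (d 1)" "E b (d 2)" "\<not> E b (d 0)" "\<not> E b (d 3)" "\<not> E b (d 4)"
     "E x a" "E x b" "\<not> E a b" "a \<noteq> b" "a \<in> V" "b \<in> V"
     "\<forall>k<5. a \<noteq> d k" "\<forall>k<5. b \<noteq> d k" "x \<noteq> a" "x \<noteq> b" for a b
  proof -
    have "has_induced {0..<6} P5twin_E V E"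
      apply (rule embed[where vs="[d 3, d 2, d 1, x, a, b]"])
      using that xV dV d01 dne(1)[of 1] dne(1)[of 2] dne(1)[of 3] dE' xd'
      by (auto simp: six P5twin_E_def symc_def sy)
    with nop5 show False by simp
  qed
  obtain ja where ja: "ja \<in> {1,2,3,4}" "\<forall>k<5. E a (d k) \<longleftrightarrow> (k = ja \<or> k = (ja + 1) mod 5)"
    using ad by blast
  obtain jb where jb: "jb \<in> {1,2,3,4}" "\<forall>k<5. E b (d k) \<longleftrightarrow> (k = jb \<or> k = (jb + 1) mod 5)"
    using bd by blast
  have aE: "E a (d k) \<longleftrightarrow> (k = ja \<or> k = (ja + 1) mod 5)" if "k < 5" for k using ja that by blast
  have bE: "E b (d k) \<longleftrightarrow> (k = jb \<or> k = (jb + 1) mod 5)" if "k < 5" for k using jb that by blast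
  have dist0: "distinct [x, d 0, a, b]" "distinct [x, d 1, a, b]"
    using xa' ab dne[of 0] dne[of 1] by auto
  have c0: "E a (d 0) \<or> E b (d 0)"
  proof (rule ccontr)
    assume "\<not> (E a (d 0) \<or> E b (d 0))"
    then show False using claw[of "d 0" a b] sy xd'(1) xa xb nab dV aV bV dist0(1) by auto
  qed
  have c1: "E a (d 1) \<or> E b (d 1)"
  proof (rule ccontr)
    assume "\<not> (E a (d 1) \<or> E b (d 1))"
    then show False using claw[of "d 1" a b] sy xd'(2) xa xb nab dV aV bV dist0(2) by auto
  qed
  have a0: "E a (d 0) \<longleftrightarrow> ja = 4" using aE[of 0] ja(1) by (elim insertE; simp)
  have b0: "E b (d 0) \<longleftrightarrow> jb = 4" using bE[of 0] jb(1) by (elim insertE; simp)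
  have a1: "E a (d 1) \<longleftrightarrow> ja = 1" using aE[of 1] ja(1) by (elim insertE; simp)
  have b1: "E b (d 1) \<longleftrightarrow> jb = 1" using bE[of 1] jb(1) by (elim insertE; simp)
  have dneq: "\<forall>k<5. a \<noteq> d k" "\<forall>k<5. b \<noteq> d k" using dne by auto
  have "(ja = 4 \<and> jb = 1) \<or> (ja = 1 \<and> jb = 4)" using c0 c1 a0 b0 a1 b1 by auto
  then show False
  proof
    assume h: "ja = 4 \<and> jb = 1"
    show False
      apply (rule p5[of a b])
      using h aE[of 0] aE[of 1] aE[of 2] aE[of 3] aE[of 4] bE[of 0] bE[of 1] bE[of 2] bE[of 3] bE[of 4]
        xa xb nab ab aV bV dneq xa' by simp_all
  next
    assume h: "ja = 1 \<and> jb = 4"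
    show False
      apply (rule p5[of b a])
      using h aE[of 0] aE[of 1] aE[of 2] aE[of 3] aE[of 4] bE[of 0] bE[of 1] bE[of 2] bE[of 3] bE[of 4]
        xa xb nab ab aV bV dneq xa' sy[of a b] by simp_all
  qed
qed

theorem claim18:
  fixes V :: "'a set" and E :: "'a \<Rightarrow> 'a \<Rightarrow> bool" and c :: "nat \<Rightarrow> 'a"
  assumes "graph V E" and "connected_graph V E" and "in_class_C V E"
    and "induced_C5 V E c"
    and "i < 5"
  shows "\<not> (\<exists>x \<in> Xset V E c i. \<exists>a \<in> Xall V E c - Xset V E c i. \<exists>b \<in> Xall V E c - Xset V E c i.
            a \<noteq> b \<and> E x a \<and> E x b \<and> \<not> E a b)"
proof
  assume "\<exists>x \<in> Xset V E c i. \<exists>a \<in> Xall V E c - Xset V E c i. \<exists>b \<in> Xall V E c - Xset V E c i.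
            a \<noteq> b \<and> E x a \<and> E x b \<and> \<not> E a b"
  then obtain x a b where x: "x \<in> Xset V E c i" and a: "a \<in> Xall V E c" "a \<notin> Xset V E c i"
    and b: "b \<in> Xall V E c" "b \<notin> Xset V E c i" and r: "a \<noteq> b" "E x a" "E x b" "\<not> E a b"
    by blast
  obtain ja where ja: "ja < 5" "a \<in> Xset V E c ja" using a unfolding Xall_def by blast
  obtain jb where jb: "jb < 5" "b \<in> Xset V E c jb" using b unfolding Xall_def by blast
  have jai: "ja \<noteq> i" using ja a by auto
  have jbi: "jb \<noteq> i" using jb b by auto
  have G: "\<forall>u v. E u v \<longrightarrow> E v u" "\<forall>u. \<not> E u u" using assms(1) unfolding graph_def by auto
  have C5: "inj_on c {0..<5}" "c ` {0..<5} \<subseteq> V"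
    "\<forall>i<5. \<forall>j<5. E (c i) (c j) \<longleftrightarrow> (j = (i + 1) mod 5 \<or> i = (j + 1) mod 5)"
    using assms(4) unfolding induced_C5_def by auto
  define d where "d k = c ((i + k) mod 5)" for k
  have XV: "v \<in> V" "v \<notin> c ` {0..<5}" if "v \<in> Xset V E c j" for v j
    using that by (auto simp: Xset_def)
  have XE: "E v (c m) \<longleftrightarrow> (m = j mod 5 \<or> m = (j+1) mod 5)" if "v \<in> Xset V E c j" "m < 5" for v j m
    using that by (auto simp: Xset_def nbrs_on_C_def set_eq_iff)
  have dE: "\<forall>k<5. \<forall>l<5. E (d k) (d l) \<longleftrightarrow> (l = (k + 1) mod 5 \<or> k = (l + 1) mod 5)"
  proof (intro allI impI)
    fix k l :: nat assume kl: "k < 5" "l < 5"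
    have "E (d k) (d l) \<longleftrightarrow> ((i+l) mod 5 = ((i+k) mod 5 + 1) mod 5 \<or> (i+k) mod 5 = ((i+l) mod 5 + 1) mod 5)"
      unfolding d_def using C5(3) by simp
    also have "\<dots> \<longleftrightarrow> (l = (k + 1) mod 5 \<or> k = (l + 1) mod 5)" using kl assms(5) unfolding less5 by (elim disjE; simp)
    finally show "E (d k) (d l) \<longleftrightarrow> (l = (k + 1) mod 5 \<or> k = (l + 1) mod 5)" .
  qed
  have dinj: "inj_on d {0..<5}"
  proof (rule inj_onI)
    fix k l assume kl: "k \<in> {0..<5}" "l \<in> {0..<5}" "d k = d l"
    then have "(i+k) mod 5 = (i+l) mod 5" unfolding d_def using C5(1) by (simp add: inj_on_def)
    moreover have "k < 5" "l < 5" using kl by auto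
    ultimately show "k = l" using assms(5) unfolding less5 by (elim disjE; simp)
  qed
  have dV: "\<forall>k<5. d k \<in> V" using C5(2) unfolding d_def by auto
  have nd: "v \<notin> d ` {0..<5}" if "v \<notin> c ` {0..<5}" for v
    using that unfolding d_def by auto
  have xd: "\<forall>k<5. E x (d k) \<longleftrightarrow> (k = 0 \<or> k = 1)"
  proof (intro allI impI)
    fix k :: nat assume k: "k < 5"
    have "E x (d k) \<longleftrightarrow> ((i+k) mod 5 = i mod 5 \<or> (i+k) mod 5 = (i+1) mod 5)"
      unfolding d_def using XE[OF x, of "(i+k) mod 5"] by simp
    also have "\<dots> \<longleftrightarrow> (k = 0 \<or> k = 1)" using k assms(5) unfolding less5 by (elim disjE; simp)
    finally show "E x (d k) \<longleftrightarrow> (k = 0 \<or> k = 1)" .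
  qed
  have vtyp: "\<exists>j'\<in>{1,2,3,4}. \<forall>k<5. E v (d k) \<longleftrightarrow> (k = j' \<or> k = (j' + 1) mod 5)"
    if "v \<in> Xset V E c j" "j < 5" "j \<noteq> i" for v j
  proof -
    have j'': "(j + 5 - i) mod 5 \<in> {1,2,3,4}" using that(2,3) assms(5) unfolding less5 by (elim disjE; simp)
    have "\<forall>k<5. E v (d k) \<longleftrightarrow> (k = (j + 5 - i) mod 5 \<or> k = ((j + 5 - i) mod 5 + 1) mod 5)"
    proof (intro allI impI)
      fix k :: nat assume k: "k < 5"
      have "E v (d k) \<longleftrightarrow> ((i+k) mod 5 = j mod 5 \<or> (i+k) mod 5 = (j+1) mod 5)"
        unfolding d_def using XE[OF that(1), of "(i+k) mod 5"] by simp
      also have "\<dots> \<longleftrightarrow> (k = (j + 5 - i) mod 5 \<or> k = ((j + 5 - i) mod 5 + 1) mod 5)"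
        using k that(2) assms(5) unfolding less5 by (elim disjE; simp)
      finally show "E v (d k) \<longleftrightarrow> (k = (j + 5 - i) mod 5 \<or> k = ((j + 5 - i) mod 5 + 1) mod 5)" .
    qed
    then show ?thesis using j'' by blast
  qed
  show False
    apply (rule core[where d=d and x=x and a=a and b=b and E=E and V=V])
    using G assms(3) dV XV(1)[OF x] XV(1)[OF ja(2)] XV(1)[OF jb(2)] dinj dE xd
      vtyp[OF ja(2) ja(1) jai] vtyp[OF jb(2) jb(1) jbi] nd[OF XV(2)[OF x]] nd[OF XV(2)[OF ja(2)]]
      nd[OF XV(2)[OF jb(2)]] r by simp_all
qed

end
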